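(* Fix $k$ and let $C(m)=\binom{2m}{m+k}$ and $C_L(m)=\frac{1}{4^m}\binom{2m}{m+k}$, regarded as functions of $m$. For $j\ge1$ let $$\Delta_j(m)=(-1)^j\big[2^j\psi^{(j-1)}(2m+1)-\psi^{(j-1)}(m+1+k)-\psi^{(j-1)}(m+1-k)\big],$$ and define $x_0(m)=1$, $x_1(m)=0$, and $x_j(m)=\sum_{l=0}^{j-2}\binom{j-1}{l}\Delta_{j-l}(m)x_l(m)$ for $j\ge2$. Then for every $p\in\mathbb{N}_0$ and every $m$ at which these quantities are defined, $$C^{(p)}(m)=(-1)^p\binom{2m}{m+k}\sum_{i=0}^{p}\binom{p}{i}\Delta_1(m)^{p-i}x_i(m)$$ and $$C_L^{(p)}(m)=(-1)^p\binom{2m}{m+k}\sum_{i=0}^{p}\binom{p}{i}\big(\Delta_1(m)+\log 4\big)^{p-i}x_i(m).$$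
   Context: The binomial coefficient is defined via the gamma function: $\binom{2m}{m+k}=\frac{\Gamma(2m+1)}{\Gamma(m+k+1)\Gamma(m-k+1)}$. $\psi^{(n)}(z)=\frac{d^{n+1}}{dz^{n+1}}\log\Gamma(z)$ is the polygamma function. The identities are asserted at values of $m$ where none of $2m+1$, $m+1+k$, $m+1-k$ is a non-positive integer, so that all gamma and polygamma values involved are finite. *)

theory Defs
  imports "HOL-Analysis.Analysis"
begin

definition gbinom :: "real \<Rightarrow> real \<Rightarrow> real" where
  "gbinom k m = Gamma (2*m+1) / (Gamma (m+k+1) * Gamma (m-k+1))"

definition Delta :: "real \<Rightarrow> nat \<Rightarrow> real \<Rightarrow> real" where
  "Delta k j m = (-1)^j * (2^j * Polygamma (j-1) (2*m+1)
                   - Polygamma (j-1) (m+1+k) - Polygamma (j-1) (m+1-k))"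

fun xseq :: "real \<Rightarrow> nat \<Rightarrow> real \<Rightarrow> real" where
  "xseq k j m = (if j = 0 then 1 else if j = 1 then 0 else
      (\<Sum>l=0..j-2. real ((j-1) choose l) * Delta k (j-l) m * xseq k l m))"

end

theory Submission imports Defs begin

lemma Suc_choose': "Suc n choose k = (n choose k) + (if k = 0 then 0 else (n choose (k-1)))"
  by (cases k) auto

lemma leibniz_real:
  fixes f g :: "real \<Rightarrow> real"
  assumes S: "open S"
    and df: "\<forall>i<n. \<forall>t\<in>S. (deriv ^^ i) f field_differentiable at t"
    and dg: "\<forall>i<n. \<forall>t\<in>S. (deriv ^^ i) g field_differentiable at t"
    and z: "z \<in> S"
  shows "(deriv ^^ n) (\<lambda>w. f w * g w) z =
           (\<Sum>i = 0..n. of_nat (n choose i) * (deriv ^^ i) f z * (deriv ^^ (n-i)) g z)"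
using z df dg
proof (induction n arbitrary: z)
  case 0 then show ?case by simp
next
  case (Suc n z)
  have *: "\<And>i w. i \<le> n \<Longrightarrow> w \<in> S \<Longrightarrow> ((deriv ^^ i) f has_field_derivative deriv ((deriv ^^ i) f) w) (at w)"
          "\<And>i w. i \<le> n \<Longrightarrow> w \<in> S \<Longrightarrow> ((deriv ^^ i) g has_field_derivative deriv ((deriv ^^ i) g) w) (at w)"
  proof -
    fix i w assume "i \<le> n" "w \<in> S"
    then show "((deriv ^^ i) f has_field_derivative deriv ((deriv ^^ i) f) w) (at w)"
      using Suc.prems(2) DERIV_deriv_iff_field_differentiable by (metis less_Suc_eq_le)
  next
    fix i w assume "i \<le> n" "w \<in> S"
    then show "((deriv ^^ i) g has_field_derivative deriv ((deriv ^^ i) g) w) (at w)"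
      using Suc.prems(3) DERIV_deriv_iff_field_differentiable by (metis less_Suc_eq_le)
  qed
  have IH: "\<And>w. w \<in> S \<Longrightarrow> (deriv ^^ n) (\<lambda>w. f w * g w) w =
           (\<Sum>i = 0..n. of_nat (n choose i) * (deriv ^^ i) f w * (deriv ^^ (n-i)) g w)"
    using Suc by auto
  have sumeq: "(\<Sum>i = 0..n.
               of_nat (n choose i) * (deriv ((deriv ^^ i) f) z * (deriv ^^ (n-i)) g z + deriv ((deriv ^^ (n-i)) g) z * (deriv ^^ i) f z)) =
            g z * deriv ((deriv ^^ n) f) z + (\<Sum>i = 0..n. (deriv ^^ i) f z * (of_nat (Suc n choose i) * (deriv ^^ (Suc n - i)) g z))"
    apply (simp add: Suc_choose' algebra_simps sum.distrib)
    apply (subst (4) sum_Suc_reindex)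
    apply (auto simp: algebra_simps Suc_diff_le intro: sum.cong)
    done
  have "((\<lambda>w. (\<Sum>i = 0..n. of_nat (n choose i) * (deriv ^^ i) f w * (deriv ^^ (n-i)) g w)) has_field_derivative
         (\<Sum>i = 0..n. of_nat (n choose i) * (deriv ((deriv ^^ i) f) z * (deriv ^^ (n-i)) g z + deriv ((deriv ^^ (n-i)) g) z * (deriv ^^ i) f z))) (at z)"
  proof (rule DERIV_sum)
    fix i assume i: "i \<in> {0..n}"
    have "((\<lambda>w. (deriv ^^ i) f w * (deriv ^^ (n-i)) g w) has_field_derivative
       (deriv ((deriv ^^ i) f) z * (deriv ^^ (n-i)) g z + deriv ((deriv ^^ (n-i)) g) z * (deriv ^^ i) f z)) (at z)"
      using *[of i z] *(2)[of "n-i" z] i Suc.prems(1) by (intro DERIV_mult) auto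
    from DERIV_cmult[OF this, of "of_nat (n choose i)"]
    show "((\<lambda>w. of_nat (n choose i) * (deriv ^^ i) f w * (deriv ^^ (n-i)) g w) has_field_derivative
      of_nat (n choose i) * (deriv ((deriv ^^ i) f) z * (deriv ^^ (n-i)) g z + deriv ((deriv ^^ (n-i)) g) z * (deriv ^^ i) f z)) (at z)"
      by (simp add: mult.assoc)
  qed
  note D = this
  have "((deriv ^^ n) (\<lambda>w. f w * g w) has_field_derivative
         (\<Sum>i = 0..Suc n. (Suc n choose i) * (deriv ^^ i) f z * (deriv ^^ (Suc n - i)) g z))
        (at z)"
  proof -
    have e: "(\<Sum>i = 0..Suc n. (Suc n choose i) * (deriv ^^ i) f z * (deriv ^^ (Suc n - i)) g z)
      = (\<Sum>i = 0..n.
               of_nat (n choose i) * (deriv ((deriv ^^ i) f) z * (deriv ^^ (n-i)) g z + deriv ((deriv ^^ (n-i)) g) z * (deriv ^^ i) f z))"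
      unfolding sumeq by (simp add: algebra_simps)
    show ?thesis unfolding e
      apply (rule has_field_derivative_transform_within_open[OF D S Suc.prems(1)])
      using IH apply simp
      done
  qed
  then show ?case
    unfolding funpow.simps o_apply
    by (simp add: DERIV_imp_deriv)
qed
fun Yb :: "(nat \<Rightarrow> real) \<Rightarrow> nat \<Rightarrow> real" where
  "Yb a n = (if n = 0 then 1 else (\<Sum>l=0..n-1. real ((n-1) choose l) * a (n-l) * Yb a l))"

declare Yb.simps[simp del]

lemma Yb_0[simp]: "Yb a 0 = 1"
  by (simp add: Yb.simps)

lemma Yb_Suc: "Yb a (Suc n) = (\<Sum>l=0..n. real (n choose l) * a (Suc n - l) * Yb a l)"
  by (subst Yb.simps) simp

lemma fd_transform_open:
  assumes "g field_differentiable at t" "open S" "t \<in> S" "\<And>x. x \<in> S \<Longrightarrow> g x = f x"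
  shows "f field_differentiable at t"
  using assms has_field_derivative_transform_within_open unfolding field_differentiable_def
  by metis

lemma Yb_differentiable:
  fixes c :: "nat \<Rightarrow> real \<Rightarrow> real"
  assumes dc: "\<And>j. 0 < j \<Longrightarrow> (c j) field_differentiable at t"
  shows "(\<lambda>t. Yb (\<lambda>j. c j t) n) field_differentiable at t"
proof (induction n rule: less_induct)
  case (less n)
  show ?case
  proof (cases n)
    case 0 then show ?thesis by simp
  next
    case (Suc m)
    have "(\<lambda>t. \<Sum>l=0..m. real (m choose l) * c (Suc m - l) t * Yb (\<lambda>j. c j t) l) field_differentiable at t"
      by (intro field_differentiable_sum field_differentiable_mult field_differentiable_const dc less) (auto simp: Suc Suc_diff_le)
    then show ?thesis unfolding Suc Yb_Suc .
  qed
qed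

lemma higher_deriv_chain_c:
  fixes c :: "nat \<Rightarrow> real \<Rightarrow> real"
  assumes S: "open S"
    and dc: "\<And>j t. 0 < j \<Longrightarrow> t \<in> S \<Longrightarrow> (c j has_real_derivative c (Suc j) t) (at t)"
    and j: "0 < j"
  shows "t \<in> S \<Longrightarrow> (deriv ^^ i) (c j) t = c (j + i) t"
proof (induction i arbitrary: t)
  case 0 then show ?case by simp
next
  case (Suc i)
  have ev: "eventually (\<lambda>x. (deriv ^^ i) (c j) x = c (j+i) x) (nhds t)"
    using eventually_nhds_in_open[OF S Suc.prems] by eventually_elim (rule Suc.IH)
  have "(deriv ^^ Suc i) (c j) t = deriv ((deriv ^^ i) (c j)) t" by simp
  also have "\<dots> = deriv (c (j+i)) t" by (rule deriv_cong_ev[OF ev refl])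
  also have "\<dots> = c (j + Suc i) t" using dc[OF _ Suc.prems] j by (simp add: DERIV_imp_deriv)
  finally show ?case .
qed

lemma bell_deriv:
  fixes f :: "real \<Rightarrow> real" and c :: "nat \<Rightarrow> real \<Rightarrow> real"
  assumes S: "open S"
    and df: "\<And>t. t \<in> S \<Longrightarrow> (f has_real_derivative f t * c 1 t) (at t)"
    and dc: "\<And>j t. 0 < j \<Longrightarrow> t \<in> S \<Longrightarrow> (c j has_real_derivative c (Suc j) t) (at t)"
  shows "\<forall>t\<in>S. (deriv ^^ n) f t = f t * Yb (\<lambda>j. c j t) n"
proof (induction n rule: less_induct)
  case (less n)
  have fdf: "\<And>t. t \<in> S \<Longrightarrow> f field_differentiable at t"
    using df field_differentiable_def by blast
  have fdc: "\<And>j t. 0 < j \<Longrightarrow> t \<in> S \<Longrightarrow> c j field_differentiable at t"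
    using dc field_differentiable_def by blast
  have dfi: "\<forall>i<n. \<forall>t\<in>S. (deriv ^^ i) f field_differentiable at t"
  proof (intro allI impI ballI)
    fix i t assume i: "i < n" and t: "t \<in> S"
    have "(\<lambda>t. f t * Yb (\<lambda>j. c j t) i) field_differentiable at t"
      by (intro field_differentiable_mult fdf[OF t] Yb_differentiable fdc[OF _ t])
    then show "(deriv ^^ i) f field_differentiable at t"
      by (rule fd_transform_open[OF _ S t]) (use less[OF i] in auto)
  qed
  show ?case
  proof (cases n)
    case 0 then show ?thesis by simp
  next
    case (Suc m)
    show ?thesis
    proof
      fix t assume t: "t \<in> S"
      have dfe: "\<And>x. x \<in> S \<Longrightarrow> deriv f x = f x * c 1 x"
        using df DERIV_imp_deriv by blast
      have ev: "eventually (\<lambda>x. deriv f x = f x * c 1 x) (nhds t)"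
        using eventually_nhds_in_open[OF S t] by eventually_elim (rule dfe)
      have "(deriv ^^ n) f t = (deriv ^^ m) (deriv f) t"
        unfolding Suc by (subst funpow_Suc_right) simp
      also have "\<dots> = (deriv ^^ m) (\<lambda>x. f x * c 1 x) t"
        by (rule higher_deriv_cong_ev[OF ev refl])
      also have "\<dots> = (\<Sum>i = 0..m. of_nat (m choose i) * (deriv ^^ i) f t * (deriv ^^ (m-i)) (c 1) t)"
      proof (rule leibniz_real[OF S _ _ t])
        show "\<forall>i<m. \<forall>t\<in>S. (deriv ^^ i) f field_differentiable at t" using dfi Suc by auto
        show "\<forall>i<m. \<forall>t\<in>S. (deriv ^^ i) (c 1) field_differentiable at t"
        proof (intro allI impI ballI)
          fix i t assume t: "t \<in> S"
          show "(deriv ^^ i) (c 1) field_differentiable at t"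
            by (rule fd_transform_open[OF fdc[OF _ t] S t])
               (use higher_deriv_chain_c[where c=c and j=1, OF S dc] in auto)
        qed
      qed
      also have "\<dots> = (\<Sum>i = 0..m. of_nat (m choose i) * (f t * Yb (\<lambda>j. c j t) i) * c (Suc m - i) t)"
        by (intro sum.cong refl)
           (use less[rule_format, of _ t] t higher_deriv_chain_c[where c=c and j=1, OF S dc _ t] Suc in \<open>auto simp: Suc_diff_le\<close>)
      also have "\<dots> = f t * Yb (\<lambda>j. c j t) n"
        unfolding Suc Yb_Suc by (simp add: sum_distrib_left algebra_simps)
      finally show "(deriv ^^ n) f t = f t * Yb (\<lambda>j. c j t) n" .
    qed
  qed
qed


lemma xseq_Yb:
  assumes a1: "a 1 = 0" and aD: "\<And>j. 2 \<le> j \<Longrightarrow> Delta k j m = (-1)^j * a j"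
  shows "xseq k i m = (-1)^i * Yb a i"
proof (induction i rule: less_induct)
  case (less i)
  consider "i = 0" | "i = 1" | n where "i = Suc (Suc n)"
    by (metis One_nat_def not0_implies_Suc)
  then show ?case
  proof cases
    case 1 then show ?thesis by (subst xseq.simps) simp
  next
    case 2 then show ?thesis by (subst xseq.simps) (simp add: Yb_Suc a1[simplified])
  next
    case 3
    have "xseq k i m = (\<Sum>l=0..n. real (Suc n choose l) * Delta k (Suc (Suc n) - l) m * xseq k l m)"
      unfolding 3 by (subst xseq.simps) simp
    also have "\<dots> = (\<Sum>l=0..n. (-1)^i * (real (Suc n choose l) * a (Suc (Suc n) - l) * Yb a l))"
    proof (intro sum.cong refl)
      fix l assume l: "l \<in> {0..n}"
      have e: "(-1::real)^(Suc (Suc n) - l) * (-1)^l = (-1)^i"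
        using l unfolding 3 by (simp flip: power_add)
      show "real (Suc n choose l) * Delta k (Suc (Suc n) - l) m * xseq k l m =
            (-1)^i * (real (Suc n choose l) * a (Suc (Suc n) - l) * Yb a l)"
        using l less[of l] aD[of "Suc (Suc n) - l"] e unfolding 3
        by (auto simp: algebra_simps)
    qed
    also have "\<dots> = (-1)^i * Yb a i"
      unfolding 3 Yb_Suc by (simp add: sum_distrib_left a1[simplified])
    finally show ?thesis .
  qed
qed


definition bb :: "real \<Rightarrow> nat \<Rightarrow> real \<Rightarrow> real" where
  "bb k j t = 2^j * Polygamma (j-1) (2*t+1) - Polygamma (j-1) (t+1+k) - Polygamma (j-1) (t+1-k)"

lemma Delta_bb: "Delta k j t = (-1)^j * bb k j t"
  by (simp add: Delta_def bb_def)

definition SS :: "real \<Rightarrow> real set" where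
  "SS k = {t. 2*t+1 \<notin> \<int>\<^sub>\<le>\<^sub>0 \<and> t+1+k \<notin> \<int>\<^sub>\<le>\<^sub>0 \<and> t+1-k \<notin> \<int>\<^sub>\<le>\<^sub>0}"

lemma open_SS: "open (SS k)"
proof -
  have o: "open ((\<lambda>t::real. a*t+b) -` (- \<int>\<^sub>\<le>\<^sub>0))" for a b :: real
    by (intro continuous_open_vimage open_Compl closed_nonpos_Ints) (auto intro!: continuous_intros)
  have "SS k = ((\<lambda>t. 2*t+1) -` (- \<int>\<^sub>\<le>\<^sub>0)) \<inter> ((\<lambda>t. 1*t+(1+k)) -` (- \<int>\<^sub>\<le>\<^sub>0)) \<inter> ((\<lambda>t. 1*t+(1-k)) -` (- \<int>\<^sub>\<le>\<^sub>0))"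
    by (auto simp: SS_def algebra_simps)
  then show ?thesis using o by (metis open_Int)
qed

lemma bb_deriv:
  assumes "0 < j" "t \<in> SS k"
  shows "(bb k j has_real_derivative bb k (Suc j) t) (at t)"
proof -
  obtain i where j: "j = Suc i" using assms(1) gr0_implies_Suc by blast
  have "((\<lambda>t. 2^j * Polygamma i (2*t+1) - Polygamma i (t+1+k) - Polygamma i (t+1-k)) has_real_derivative
     2^j * (Polygamma (Suc i) (2*t+1) * 2) - Polygamma (Suc i) (t+1+k) - Polygamma (Suc i) (t+1-k)) (at t)"
    using assms(2) unfolding SS_def
    by (auto intro!: derivative_eq_intros)
  then show ?thesis unfolding bb_def j by (simp add: algebra_simps)
qed

lemma gbinom_deriv:
  assumes "t \<in> SS k"
  shows "(gbinom k has_real_derivative gbinom k t * bb k 1 t) (at t)"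
proof -
  have g1: "Gamma (2*t+1) \<noteq> 0" "Gamma (t+k+1) \<noteq> 0" "Gamma (t-k+1) \<noteq> 0"
    using assms unfolding SS_def by (auto simp: Gamma_eq_zero_iff algebra_simps)
  have ne: "2*t+1 \<notin> \<int>\<^sub>\<le>\<^sub>0" "t+k+1 \<notin> \<int>\<^sub>\<le>\<^sub>0" "t-k+1 \<notin> \<int>\<^sub>\<le>\<^sub>0"
    using assms unfolding SS_def by (auto simp: algebra_simps)
  have D1: "((\<lambda>t. Gamma (2*t+1)) has_real_derivative Gamma (2*t+1) * Digamma (2*t+1) * 2) (at t)"
    using ne by (auto intro!: derivative_eq_intros)
  have D2: "((\<lambda>t. Gamma (t+k+1)) has_real_derivative Gamma (t+k+1) * Digamma (t+k+1)) (at t)"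
    using ne by (auto intro!: derivative_eq_intros)
  have D3: "((\<lambda>t. Gamma (t-k+1)) has_real_derivative Gamma (t-k+1) * Digamma (t-k+1)) (at t)"
    using ne by (auto intro!: derivative_eq_intros)
  note D4 = DERIV_divide[OF D1 DERIV_mult[OF D2 D3]]
  have e: "(Gamma (2*t+1) * Digamma (2*t+1) * 2 * (Gamma (t+k+1) * Gamma (t-k+1)) -
          Gamma (2*t+1) * (Gamma (t+k+1) * Digamma (t+k+1) * Gamma (t-k+1) + Gamma (t-k+1) * Digamma (t-k+1) * Gamma (t+k+1))) /
         (Gamma (t+k+1) * Gamma (t-k+1) * (Gamma (t+k+1) * Gamma (t-k+1))) = gbinom k t * bb k 1 t"
    using g1 unfolding gbinom_def bb_def by (simp add: field_simps add_ac)
  show ?thesis unfolding gbinom_def[abs_def] using D4 g1 e unfolding gbinom_def by simp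
qed


lemma sign_term:
  assumes "i \<le> p"
  shows "(-1::real)^p * ((-\<delta>)^(p-i) * ((-1)^i * y)) = \<delta>^(p-i) * y"
proof -
  obtain d where p: "p = i + d" using assms le_Suc_ex by blast
  have "(-1::real)^p * ((-\<delta>)^(p-i) * ((-1)^i * y)) = ((-1)^(i+d) * (-1)^d * (-1)^i) * (\<delta>^d * y)"
    unfolding p by (simp add: power_minus[of \<delta>] algebra_simps)
  also have "(-1::real)^(i+d) * (-1)^d * (-1)^i = ((-1)^(i+d))^2"
    by (simp add: power_add power2_eq_square algebra_simps)
  also have "\<dots> = 1" by (simp add: power_even_eq[symmetric] power_mult[symmetric])
  finally show ?thesis unfolding p by simp
qed

lemma main_gamma:
  assumes m: "m \<in> SS k"
  shows "(deriv ^^ p) (\<lambda>t. gbinom k t * exp (\<gamma>*t)) m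
    = (-1)^p * (gbinom k m * exp (\<gamma>*m)) * (\<Sum>i=0..p. real (p choose i) * (Delta k 1 m - \<gamma>)^(p-i) * xseq k i m)"
proof -
  define \<beta> where "\<beta> = bb k 1 m"
  define \<delta> where "\<delta> = \<beta> + \<gamma>"
  define E where "E = (\<lambda>t. exp (\<delta>*(t-m)))"
  define H where "H = (\<lambda>t. gbinom k t * exp (\<gamma>*t - \<delta>*(t-m)))"
  define c where "c = (\<lambda>j t. bb k j t - (if j = 1 then \<beta> else 0))"
  have S: "open (SS k)" by (rule open_SS)
  have F: "(\<lambda>t. gbinom k t * exp (\<gamma>*t)) = (\<lambda>t. H t * E t)"
    by (auto simp: H_def E_def mult_exp_exp)
  have dH: "(H has_real_derivative H t * c 1 t) (at t)" if t: "t \<in> SS k" for t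
  proof -
    have "((\<lambda>t. exp (\<gamma>*t - \<delta>*(t-m))) has_real_derivative exp (\<gamma>*t - \<delta>*(t-m)) * (\<gamma> - \<delta>)) (at t)"
      by (auto intro!: derivative_eq_intros)
    from DERIV_mult[OF gbinom_deriv[OF t] this] show ?thesis
      unfolding H_def c_def \<delta>_def by (simp add: algebra_simps)
  qed
  have dc: "(c j has_real_derivative c (Suc j) t) (at t)" if "0 < j" "t \<in> SS k" for j t
  proof -
    have "((\<lambda>t. bb k j t - (if j = 1 then \<beta> else 0)) has_real_derivative bb k (Suc j) t - 0) (at t)"
      by (intro DERIV_diff bb_deriv that DERIV_const)
    then show ?thesis unfolding c_def using that(1) by simp
  qed
  have HY: "\<forall>t\<in>SS k. (deriv ^^ n) H t = H t * Yb (\<lambda>j. c j t) n" for n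
    by (rule bell_deriv[OF S dH dc])
  have EY: "(deriv ^^ n) E = (\<lambda>t. \<delta>^n * E t)" for n
  proof (induction n)
    case 0 then show ?case by simp
  next
    case (Suc n)
    have "((\<lambda>t. \<delta>^n * E t) has_real_derivative \<delta>^(Suc n) * E t) (at t)" for t
      unfolding E_def by (auto intro!: derivative_eq_intros)
    then show ?case using Suc by (auto intro!: ext DERIV_imp_deriv)
  qed
  have fdc: "c j field_differentiable at t" if "0 < j" "t \<in> SS k" for j t
    using dc[OF that] field_differentiable_def by blast
  have fdH: "H field_differentiable at t" if "t \<in> SS k" for t
    using dH[OF that] field_differentiable_def by blast
  have dHi: "\<forall>i<p. \<forall>t\<in>SS k. (deriv ^^ i) H field_differentiable at t"
  proof (intro allI impI ballI)
    fix i t assume t: "t \<in> SS k"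
    have "(\<lambda>t. H t * Yb (\<lambda>j. c j t) i) field_differentiable at t"
      by (intro field_differentiable_mult fdH[OF t] Yb_differentiable fdc[OF _ t])
    then show "(deriv ^^ i) H field_differentiable at t"
      by (rule fd_transform_open[OF _ S t]) (use HY in auto)
  qed
  have dEi: "\<forall>i<p. \<forall>t\<in>SS k. (deriv ^^ i) E field_differentiable at t"
  proof (intro allI impI ballI)
    fix i t
    have "(E has_real_derivative E t * \<delta>) (at t)"
      unfolding E_def by (auto intro!: derivative_eq_intros)
    then have "E field_differentiable at t" using field_differentiable_def by blast
    then show "(deriv ^^ i) E field_differentiable at t"
      unfolding EY by (intro field_differentiable_mult field_differentiable_const)
  qed
  have "(deriv ^^ p) (\<lambda>t. gbinom k t * exp (\<gamma>*t)) m
      = (\<Sum>i=0..p. of_nat (p choose i) * (deriv ^^ i) H m * (deriv ^^ (p-i)) E m)"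
    unfolding F by (rule leibniz_real[OF S dHi dEi m])
  also have "\<dots> = (\<Sum>i=0..p. of_nat (p choose i) * (H m * Yb (\<lambda>j. c j m) i) * (\<delta>^(p-i) * E m))"
    using HY m by (simp add: EY)
  also have "\<dots> = (gbinom k m * exp (\<gamma>*m)) * (\<Sum>i=0..p. of_nat (p choose i) * \<delta>^(p-i) * Yb (\<lambda>j. c j m) i)"
    by (simp add: H_def E_def sum_distrib_left algebra_simps)
  also have "\<dots> = (gbinom k m * exp (\<gamma>*m)) * (\<Sum>i=0..p. (-1)^p * (real (p choose i) * (Delta k 1 m - \<gamma>)^(p-i) * xseq k i m))"
  proof -
    have xs: "xseq k i m = (-1)^i * Yb (\<lambda>j. c j m) i" for i
      by (rule xseq_Yb) (auto simp: c_def \<beta>_def Delta_bb)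
    have D1: "Delta k 1 m - \<gamma> = - \<delta>" by (simp add: Delta_bb \<delta>_def \<beta>_def)
    have "of_nat (p choose i) * \<delta>^(p-i) * Yb (\<lambda>j. c j m) i
        = (-1)^p * (real (p choose i) * (Delta k 1 m - \<gamma>)^(p-i) * xseq k i m)" if "i \<in> {0..p}" for i
      using sign_term[of i p \<delta> "Yb (\<lambda>j. c j m) i"] that unfolding xs D1 by (simp add: algebra_simps) (metis (no_types, lifting))
    then show ?thesis by (intro arg_cong[where f="(*) _"] sum.cong refl) auto
  qed
  also have "\<dots> = (-1)^p * (gbinom k m * exp (\<gamma>*m)) * (\<Sum>i=0..p. real (p choose i) * (Delta k 1 m - \<gamma>)^(p-i) * xseq k i m)"
    by (simp add: sum_distrib_left algebra_simps)
  finally show ?thesis .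
qed

theorem theorem3:
  fixes k m :: real and p :: nat
  assumes "2*m+1 \<notin> \<int>\<^sub>\<le>\<^sub>0" and "m+1+k \<notin> \<int>\<^sub>\<le>\<^sub>0" and "m+1-k \<notin> \<int>\<^sub>\<le>\<^sub>0"
  shows "(deriv ^^ p) (\<lambda>t. gbinom k t) m
           = (-1)^p * gbinom k m * (\<Sum>i=0..p. real (p choose i) * Delta k 1 m ^ (p-i) * xseq k i m)
       \<and> (deriv ^^ p) (\<lambda>t. gbinom k t / 4 powr t) m
           = (-1)^p * (gbinom k m / 4 powr m)
               * (\<Sum>i=0..p. real (p choose i) * (Delta k 1 m + ln 4) ^ (p-i) * xseq k i m)"
proof
  have m: "m \<in> SS k" using assms by (simp add: SS_def)
  show "(deriv ^^ p) (\<lambda>t. gbinom k t) m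
           = (-1)^p * gbinom k m * (\<Sum>i=0..p. real (p choose i) * Delta k 1 m ^ (p-i) * xseq k i m)"
    using main_gamma[OF m, of p 0] by simp
  have e: "(\<lambda>t. gbinom k t / 4 powr t) = (\<lambda>t. gbinom k t * exp ((- ln 4) * t))"
    by (auto simp: powr_def exp_minus divide_inverse mult.commute)
  have e2: "gbinom k m / 4 powr m = gbinom k m * exp ((- ln 4) * m)"
    by (auto simp: powr_def exp_minus divide_inverse mult.commute)
  show "(deriv ^^ p) (\<lambda>t. gbinom k t / 4 powr t) m
           = (-1)^p * (gbinom k m / 4 powr m)
               * (\<Sum>i=0..p. real (p choose i) * (Delta k 1 m + ln 4) ^ (p-i) * xseq k i m)"
    unfolding e e2 using main_gamma[OF m, of p "- ln 4"] by simp
qed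

end
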